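(* Let $(M,K)$ be a paracomplex manifold with \[H^1(M)=0,\quad H^2(M)=0,\quad H^{1,0}_+(M)=0,\quad H^{0,1}_-(M)=0.\] Then $H^{1,1}_{BC}(M)=0$.
   Context: A paracomplex manifold $(M,K)$ is a manifold with a splitting $TM=V\oplus H$ into two integrable distributions of equal rank, $K=\mathrm{id}_V-\mathrm{id}_H$. Differential forms split by type, $\Omega^{p,q}$ = sections of $\Lambda^pV^*\otimes\Lambda^qH^*$ (with $V^*$ the annihilator of $H$ and $H^*$ the annihilator of $V$), and by integrability $d=\partial_++\partial_-$ with $\partial_+\colon\Omega^{p,q}\to\Omega^{p+1,q}$, $\partial_-\colon\Omega^{p,q}\to\Omega^{p,q+1}$. $H^1(M),H^2(M)$ denote de Rham cohomology. The para-Dolbeault cohomologies are $H^{p,q}_+=\ker(\partial_+|_{\Omega^{p,q}})/\partial_+(\Omega^{p-1,q})$ and $H^{p,q}_-=\ker(\partial_-|_{\Omega^{p,q}})/\partial_-(\Omega^{p,q-1})$. $K$ acts on $\Omega^{p,q}$ by $(-1)^q$, $d^c=K\circ d\circ K$, and the Bott--Chern cohomology is $H^{1,1}_{BC}=\ker(d\colon\Omega^{1,1}\to\Omega^3)/\,dd^c(\Omega^{0,0})$. *)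

theory Defs
  imports "HOL-Analysis.Analysis"
begin

text \<open>Abstract model of the bigraded de Rham complex of a paracomplex manifold.
  Om p q is the space of (p,q)-forms, a subspace of an ambient real vector space of forms;
  dp, dm are the operators partial_+ and partial_-; K is the paracomplex structure acting
  on forms.\<close>

definition Lambda :: "(nat \<Rightarrow> nat \<Rightarrow> 'f::real_vector set) \<Rightarrow> nat \<Rightarrow> 'f set" where
  "Lambda Om k = {(\<Sum>p\<le>k. x p) | x. \<forall>p\<le>k. x p \<in> Om p (k - p)}"

definition dR :: "('f::real_vector \<Rightarrow> 'f) \<Rightarrow> ('f \<Rightarrow> 'f) \<Rightarrow> 'f \<Rightarrow> 'f" where
  "dR dp dm x = dp x + dm x"

definition paracomplex_forms ::
  "(nat \<Rightarrow> nat \<Rightarrow> 'f::real_vector set) \<Rightarrow> ('f \<Rightarrow> 'f) \<Rightarrow> ('f \<Rightarrow> 'f) \<Rightarrow> ('f \<Rightarrow> 'f) \<Rightarrow> bool" where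
  "paracomplex_forms Om dp dm K \<longleftrightarrow>
     (\<forall>p q. subspace (Om p q)) \<and> linear dp \<and> linear dm \<and> linear K \<and>
     (\<forall>p q x. x \<in> Om p q \<longrightarrow>
        dp x \<in> Om (Suc p) q \<and> dm x \<in> Om p (Suc q) \<and> K x = ((-1::real) ^ q) *\<^sub>R x \<and>
        dp (dp x) = 0 \<and> dm (dm x) = 0 \<and> dp (dm x) + dm (dp x) = 0) \<and>
     (\<forall>k (x::nat \<Rightarrow> 'f). (\<forall>p\<le>k. x p \<in> Om p (k - p)) \<and> (\<Sum>p\<le>k. x p) = 0
        \<longrightarrow> (\<forall>p\<le>k. x p = 0))"

definition deRham_vanishes where
  "deRham_vanishes Om dp dm k \<longleftrightarrow>
     (\<forall>\<omega>\<in>Lambda Om k. dR dp dm \<omega> = 0 \<longrightarrow> (\<exists>\<eta>\<in>Lambda Om (k - 1). \<omega> = dR dp dm \<eta>))"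

definition H10_plus_vanishes where
  "H10_plus_vanishes Om dp \<longleftrightarrow>
     (\<forall>\<omega>\<in>Om 1 0. dp \<omega> = 0 \<longrightarrow> (\<exists>f\<in>Om 0 0. \<omega> = dp f))"

definition H01_minus_vanishes where
  "H01_minus_vanishes Om dm \<longleftrightarrow>
     (\<forall>\<omega>\<in>Om 0 1. dm \<omega> = 0 \<longrightarrow> (\<exists>f\<in>Om 0 0. \<omega> = dm f))"

definition dc where "dc dp dm K x = K (dR dp dm (K x))"

definition H11_BC_vanishes where
  "H11_BC_vanishes Om dp dm K \<longleftrightarrow>
     (\<forall>\<omega>\<in>Om 1 1. dR dp dm \<omega> = 0 \<longrightarrow> (\<exists>f\<in>Om 0 0. \<omega> = dR dp dm (dc dp dm K f)))"

end

theory Submission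
  imports Defs
begin

theorem theorem6p5:
  fixes Om :: "nat \<Rightarrow> nat \<Rightarrow> 'f::real_vector set"
    and dp dm K :: "'f \<Rightarrow> 'f"
  assumes "paracomplex_forms Om dp dm K"
    and "deRham_vanishes Om dp dm 1"
    and "deRham_vanishes Om dp dm 2"
    and "H10_plus_vanishes Om dp"
    and "H01_minus_vanishes Om dm"
  shows "H11_BC_vanishes Om dp dm K"
proof -
  have sub: "\<And>p q. subspace (Om p q)" and ldp: "linear dp" and ldm: "linear dm" and lK: "linear K"
    and tp: "\<And>p q x. x \<in> Om p q \<Longrightarrow> dp x \<in> Om (Suc p) q \<and> dm x \<in> Om p (Suc q) \<and> K x = ((-1::real) ^ q) *\<^sub>R x \<and>
        dp (dp x) = 0 \<and> dm (dm x) = 0 \<and> dp (dm x) + dm (dp x) = 0"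
    and ds: "\<And>k (x::nat \<Rightarrow> 'f). (\<forall>p\<le>k. x p \<in> Om p (k - p)) \<Longrightarrow> (\<Sum>p\<le>k. x p) = 0 \<Longrightarrow> (\<forall>p\<le>k. x p = 0)"
    using assms(1) unfolding paracomplex_forms_def by blast+
  have z: "\<And>p q. 0 \<in> Om p q" using sub subspace_0 by blast
  show ?thesis unfolding H11_BC_vanishes_def
  proof (intro ballI impI)
    fix \<omega> assume w: "\<omega> \<in> Om 1 1" and dw: "dR dp dm \<omega> = 0"
    have w2: "\<omega> \<in> Lambda Om 2"
      unfolding Lambda_def
      apply (rule CollectI, rule exI[of _ "\<lambda>p. if p = 1 then \<omega> else 0"])
      using w z by (auto simp: atMost_Suc)
    obtain \<eta> where e: "\<eta> \<in> Lambda Om 1" and we: "\<omega> = dR dp dm \<eta>"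
      using assms(3) w2 dw unfolding deRham_vanishes_def by force
    obtain x where x: "\<forall>p\<le>1. x p \<in> Om p (1 - p)" and ex: "\<eta> = (\<Sum>p\<le>1. x p)"
      using e unfolding Lambda_def by blast
    define a where "a = x 0"
    define b where "b = x 1"
    have a: "a \<in> Om 0 1" and b: "b \<in> Om 1 0" using x a_def b_def by auto
    have eab: "\<eta> = a + b" using ex a_def b_def by (simp add: atMost_Suc add.commute)
    have dpa: "dp a \<in> Om 1 1" and dma: "dm a \<in> Om 0 2" and dpb: "dp b \<in> Om 2 0" and dmb: "dm b \<in> Om 1 1"
      using tp[OF a] tp[OF b] by (auto simp: numeral_2_eq_2)
    define y where "y = (\<lambda>p::nat. if p = 0 then dm a else if p = 1 then dp a + dm b - \<omega> else if p = 2 then dp b else 0)"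
    have yin: "\<forall>p\<le>2. y p \<in> Om p (2 - p)"
      using dpa dma dpb dmb w z sub unfolding y_def
      by (auto simp: subspace_add subspace_diff le_Suc_eq numeral_2_eq_2)
    have "(\<Sum>p\<le>2. y p) = dm a + (dp a + dm b - \<omega>) + dp b"
      by (simp add: y_def numeral_2_eq_2 atMost_Suc)
    also have "\<dots> = 0" using we eab ldp ldm unfolding dR_def
      by (simp add: linear_add algebra_simps)
    finally have "\<forall>p\<le>2. y p = 0" using ds[OF yin] by blast
    then have "dp a + dm b - \<omega> = 0" using y_def by (metis one_le_numeral one_neq_zero)
    then have wab: "\<omega> = dp a + dm b" by simp
    have dpb0: "dp b = 0" using \<open>\<forall>p\<le>2. y p = 0\<close> y_def by (metis order_refl zero_neq_numeral numeral_eq_one_iff semiring_norm(85))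
    have dma0: "dm a = 0" using \<open>\<forall>p\<le>2. y p = 0\<close> y_def by (metis zero_le)
    obtain g where g: "g \<in> Om 0 0" and bg: "b = dp g" using assms(4) b dpb0 unfolding H10_plus_vanishes_def by blast
    obtain h where h: "h \<in> Om 0 0" and ah: "a = dm h" using assms(5) a dma0 unfolding H01_minus_vanishes_def by blast
    define f where "f = (1/2::real) *\<^sub>R (g - h)"
    have f: "f \<in> Om 0 0" unfolding f_def using g h sub by (simp add: subspace_diff subspace_scale)
    have tf: "dp f \<in> Om 1 0" "dm f \<in> Om 0 1" "K f = f" "dp (dp f) = 0" "dm (dm f) = 0" "dp (dm f) + dm (dp f) = 0"
      using tp[OF f] by auto
    have Kdp: "K (dp f) = dp f" using tp[OF tf(1)] by simp
    have Kdm: "K (dm f) = - dm f" using tp[OF tf(2)] by simp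
    have dcf: "dc dp dm K f = dp f - dm f"
      unfolding dc_def dR_def using tf Kdp Kdm lK by (simp add: linear_add)
    have "dR dp dm (dc dp dm K f) = dm (dp f) - dp (dm f)"
      unfolding dcf dR_def using tf ldp ldm by (simp add: linear_diff)
    also have "\<dots> = - 2 *\<^sub>R dp (dm f)" using tf(6) by (simp add: algebra_simps eq_neg_iff_add_eq_0 scaleR_2)
    also have "\<dots> = dp (dm (h - g))"
      unfolding f_def using ldp ldm by (simp add: linear_scale linear_neg[symmetric] minus_diff_eq)
    also have "\<dots> = \<omega>"
    proof -
      have "dp (dm g) + dm (dp g) = 0" using tp[OF g] by simp
      then show ?thesis using wab ah bg ldp ldm by (simp add: linear_diff eq_neg_iff_add_eq_0 algebra_simps)
    qed
    finally show "\<exists>f\<in>Om 0 0. \<omega> = dR dp dm (dc dp dm K f)" using f by metis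
  qed
qed

end
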